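(* Let $\varphi=\nu\tilde n.\sigma$ be an extended well-formed frame with respect to $\mathtt{s}\in\tilde n$ such that $\varphi\nvdash\mathtt{s}$. Let $U$, $V$ and $M$ be terms public with respect to $\varphi$, with all variables of $U$ and $V$ in $\mathrm{dom}(\sigma)$ and $M$ ground. Let $W,W'$ be subterms of terms in $\mathrm{ran}(\sigma)$ such that for every occurrence $q_{\mathtt{s}}$ of $\mathtt{s}$ in $W$ (respectively $W'$) there is an encryption occurrence $q_{\mathsf{enc}}$ in $W$ (respectively $W'$) with $q_{\mathsf{enc}}<q_{\mathtt{s}}$. Then (1) $U\sigma[\mathtt{s}/M]=V\sigma[\mathtt{s}/M]$ implies $U\sigma=V\sigma$; (2) $U\sigma[\mathtt{s}/M]=W[\mathtt{s}/M]$ implies $U\sigma=W$; (3) $W[\mathtt{s}/M]=W'[\mathtt{s}/M]$ implies $W=W'$ (all equalities syntactic).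
   Context: Terms over $\Sigma=\{\mathsf{enc}/3,\mathsf{dec}/2,\mathsf{enca}/3,\mathsf{deca}/2,\mathsf{pub}/1,\mathsf{priv}/1,\langle\cdot,\cdot\rangle/2,\pi_1/1,\pi_2/1,\mathsf{sign}/2,\mathsf{check}/3,\mathsf{retrieve}/1\}$, constants, names and variables. Equational theory $E$: $\pi_i(\langle z_1,z_2\rangle)=z_i$, $\mathsf{dec}(\mathsf{enc}(z_1,z_2,z_3),z_2)=z_1$, $\mathsf{deca}(\mathsf{enca}(z_1,\mathsf{pub}(z_2),z_3),\mathsf{priv}(z_2))=z_1$, $\mathsf{check}(z_1,\mathsf{sign}(z_1,\mathsf{priv}(z_2)),\mathsf{pub}(z_2))=\mathsf{ok}$, $\mathsf{retrieve}(\mathsf{sign}(z_1,z_2))=z_1$; left-to-right orientation is convergent, giving normal forms. Positions: sequences of positive integers, prefix order $\le$ ($<$ strict), $T|_p$ subterm, $\mathrm{head}(T)$ root symbol; $T[\mathtt{s}/M]$ replaces each occurrence of $\mathtt{s}$ by $M$. Frame $\varphi=\nu\tilde n.\sigma$: restricted names $\tilde n$, acyclic substitution $\sigma$. Public term w.r.t. $\varphi$: no name of $\tilde n$, no $\mathsf{priv}$. $\varphi\vdash M$: least relation containing $x\sigma$ ($x\in\mathrm{dom}(\sigma)$) and names outside $\tilde n$, closed under symbols other than $\mathsf{priv}$ and under $=_E$. An encryption occurrence $q$ in $U$ (head of $U|_q$ in $\{\mathsf{enc},\mathsf{enca}\}$) is an agent encryption w.r.t. names $\tilde m$ if $U|_{q\cdot3}\in\tilde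 m$, a probabilistic encryption w.r.t. a set of terms $S$ if for all $V\in S$ and $p$ with $V|_p=U|_{q\cdot3}$, $p=q'\cdot3$ with $V|_{q'}=U|_q$, and plaintext-above a position $q_T$ if $q\cdot1\le q_T$. Extended well-formed w.r.t. $\mathtt{s}$: (1) all terms of $\sigma$ are in normal form; (2) every agent encryption w.r.t. $\tilde n$ in $\sigma$ is probabilistic w.r.t. $\mathrm{ran}(\sigma)$; (3) for every occurrence $q_{\mathtt{s}}$ of $\mathtt{s}$ in $y\sigma$, $y\in\mathrm{dom}(\sigma)$, some agent encryption w.r.t. $\tilde n\setminus\{\mathtt{s}\}$ is plaintext-above $q_{\mathtt{s}}$; (4) the lowest such encryption $q_0$ satisfies $\mathrm{head}(y\sigma|_q)\in\{\langle\rangle,\mathsf{sign}\}$ for all $q_0<q<q_{\mathtt{s}}$. *)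

theory Defs
  imports Main "HOL-Library.Sublist"
begin

datatype fsym = Enc | Dec | Enca | Deca | Pub | Priv | Pair | Proj1 | Proj2
  | Sign | Check | Retrieve

datatype trm = Var string | Name string | Const string | Fun fsym "trm list"

fun arity :: "fsym \<Rightarrow> nat" where
  "arity Enc = 3" | "arity Dec = 2" | "arity Enca = 3" | "arity Deca = 2"
| "arity Pub = 1" | "arity Priv = 1" | "arity Pair = 2" | "arity Proj1 = 1"
| "arity Proj2 = 1" | "arity Sign = 2" | "arity Check = 3" | "arity Retrieve = 1"

fun wf_trm :: "trm \<Rightarrow> bool" where
  "wf_trm (Fun f ts) = (length ts = arity f \<and> (\<forall>t\<in>set ts. wf_trm t))"
| "wf_trm _ = True"

fun vars_trm :: "trm \<Rightarrow> string set" where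
  "vars_trm (Var x) = {x}"
| "vars_trm (Fun f ts) = (\<Union>t\<in>set ts. vars_trm t)"
| "vars_trm _ = {}"

fun names_trm :: "trm \<Rightarrow> string set" where
  "names_trm (Name n) = {n}"
| "names_trm (Fun f ts) = (\<Union>t\<in>set ts. names_trm t)"
| "names_trm _ = {}"

fun syms_trm :: "trm \<Rightarrow> fsym set" where
  "syms_trm (Fun f ts) = insert f (\<Union>t\<in>set ts. syms_trm t)"
| "syms_trm _ = {}"

definition ok :: trm where "ok = Const ''ok''"

inductive root_step :: "trm \<Rightarrow> trm \<Rightarrow> bool" where
  "root_step (Fun Proj1 [Fun Pair [z1, z2]]) z1"
| "root_step (Fun Proj2 [Fun Pair [z1, z2]]) z2"
| "root_step (Fun Dec [Fun Enc [z1, z2, z3], z2]) z1"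
| "root_step (Fun Deca [Fun Enca [z1, Fun Pub [z2], z3], Fun Priv [z2]]) z1"
| "root_step (Fun Check [z1, Fun Sign [z1, Fun Priv [z2]], Fun Pub [z2]]) ok"
| "root_step (Fun Retrieve [Fun Sign [z1, z2]]) z1"

inductive rstep :: "trm \<Rightarrow> trm \<Rightarrow> bool" where
  root: "root_step t u \<Longrightarrow> rstep t u"
| ctxt: "i < length ts \<Longrightarrow> rstep (ts ! i) u \<Longrightarrow> rstep (Fun f ts) (Fun f (ts[i := u]))"

definition normal_form :: "trm \<Rightarrow> bool" where
  "normal_form t \<longleftrightarrow> \<not> (\<exists>u. rstep t u)"

definition eqE :: "trm \<Rightarrow> trm \<Rightarrow> bool" where
  "eqE = (sup rstep rstep\<inverse>\<inverse>)\<^sup>*\<^sup>*"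

fun subterm_at :: "trm \<Rightarrow> nat list \<Rightarrow> trm option" where
  "subterm_at t [] = Some t"
| "subterm_at (Fun f ts) (i # p) =
     (if 1 \<le> i \<and> i \<le> length ts then subterm_at (ts ! (i - 1)) p else None)"
| "subterm_at _ (i # p) = None"

definition head_in :: "trm \<Rightarrow> fsym set \<Rightarrow> bool" where
  "head_in t F \<longleftrightarrow> (\<exists>f ts. t = Fun f ts \<and> f \<in> F)"

fun repl :: "string \<Rightarrow> trm \<Rightarrow> trm \<Rightarrow> trm" where
  "repl s M (Name n) = (if n = s then M else Name n)"
| "repl s M (Fun f ts) = Fun f (map (repl s M) ts)"
| "repl s M t = t"

type_synonym subst = "string \<Rightarrow> trm option"

fun subst_apply :: "subst \<Rightarrow> trm \<Rightarrow> trm" where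
  "subst_apply \<sigma> (Var x) = (case \<sigma> x of Some t \<Rightarrow> t | None \<Rightarrow> Var x)"
| "subst_apply \<sigma> (Fun f ts) = Fun f (map (subst_apply \<sigma>) ts)"
| "subst_apply \<sigma> t = t"

definition subst_dep :: "subst \<Rightarrow> (string \<times> string) set" where
  "subst_dep \<sigma> = {(x, y). x \<in> dom \<sigma> \<and> y \<in> vars_trm (the (\<sigma> x))}"

definition acyclic_subst :: "subst \<Rightarrow> bool" where
  "acyclic_subst \<sigma> \<longleftrightarrow> finite (dom \<sigma>) \<and> acyclic (subst_dep \<sigma>)"

text \<open>Application of an acyclic substitution: applied until no variable of its
  domain remains (card (dom sigma) + 1 rounds suffice).\<close>
definition app :: "trm \<Rightarrow> subst \<Rightarrow> trm" (infixl "\<cdot>" 70) where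
  "t \<cdot> \<sigma> = (subst_apply \<sigma> ^^ (card (dom \<sigma>) + 1)) t"

definition frame_terms :: "subst \<Rightarrow> trm set" where
  "frame_terms \<sigma> = {Var x \<cdot> \<sigma> | x. x \<in> dom \<sigma>}"

definition public :: "string set \<Rightarrow> trm \<Rightarrow> bool" where
  "public ns t \<longleftrightarrow> names_trm t \<inter> ns = {} \<and> Priv \<notin> syms_trm t"

inductive deduce :: "string set \<Rightarrow> subst \<Rightarrow> trm \<Rightarrow> bool" where
  frame: "x \<in> dom \<sigma> \<Longrightarrow> deduce ns \<sigma> (Var x \<cdot> \<sigma>)"
| name: "n \<notin> ns \<Longrightarrow> deduce ns \<sigma> (Name n)"
| const: "deduce ns \<sigma> (Const c)"
| func: "f \<noteq> Priv \<Longrightarrow> length ts = arity f \<Longrightarrow> (\<forall>t\<in>set ts. deduce ns \<sigma> t)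
          \<Longrightarrow> deduce ns \<sigma> (Fun f ts)"
| eq: "deduce ns \<sigma> t \<Longrightarrow> eqE t u \<Longrightarrow> deduce ns \<sigma> u"

definition enc_occ :: "trm \<Rightarrow> nat list \<Rightarrow> bool" where
  "enc_occ U q \<longleftrightarrow> head_in (the (subterm_at U q)) {Enc, Enca} \<and> subterm_at U q \<noteq> None"

definition agent_enc :: "string set \<Rightarrow> trm \<Rightarrow> nat list \<Rightarrow> bool" where
  "agent_enc ms U q \<longleftrightarrow> enc_occ U q \<and> (\<exists>n\<in>ms. subterm_at U (q @ [3]) = Some (Name n))"

definition prob_enc :: "trm set \<Rightarrow> trm \<Rightarrow> nat list \<Rightarrow> bool" where
  "prob_enc S U q \<longleftrightarrow> enc_occ U q \<and>
     (\<forall>V\<in>S. \<forall>p. subterm_at V p = subterm_at U (q @ [3]) \<and> subterm_at V p \<noteq> None \<longrightarrow>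
        (\<exists>q'. p = q' @ [3] \<and> subterm_at V q' = subterm_at U q))"

definition plaintext_above :: "nat list \<Rightarrow> nat list \<Rightarrow> bool" where
  "plaintext_above q qT \<longleftrightarrow> prefix (q @ [1]) qT"

definition ext_wf :: "string set \<Rightarrow> subst \<Rightarrow> string \<Rightarrow> bool" where
  "ext_wf ns \<sigma> s \<longleftrightarrow>
     (\<forall>t\<in>frame_terms \<sigma>. normal_form t)
   \<and> (\<forall>t\<in>frame_terms \<sigma>. \<forall>q. agent_enc ns t q \<longrightarrow> prob_enc (frame_terms \<sigma>) t q)
   \<and> (\<forall>y\<in>dom \<sigma>. \<forall>qs. subterm_at (Var y \<cdot> \<sigma>) qs = Some (Name s) \<longrightarrow>
        (\<exists>q. agent_enc (ns - {s}) (Var y \<cdot> \<sigma>) q \<and> plaintext_above q qs))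
   \<and> (\<forall>y\<in>dom \<sigma>. \<forall>qs q0. subterm_at (Var y \<cdot> \<sigma>) qs = Some (Name s)
        \<and> agent_enc (ns - {s}) (Var y \<cdot> \<sigma>) q0 \<and> plaintext_above q0 qs
        \<and> (\<forall>q'. agent_enc (ns - {s}) (Var y \<cdot> \<sigma>) q' \<and> plaintext_above q' qs \<longrightarrow> prefix q' q0)
        \<longrightarrow> (\<forall>q. strict_prefix q0 q \<and> strict_prefix q qs \<longrightarrow>
               head_in (the (subterm_at (Var y \<cdot> \<sigma>) q)) {Pair, Sign}))"

end

theory Submission
  imports Defs
begin

lemma subterm_at_append:
  "subterm_at t (p @ q) = (case subterm_at t p of None \<Rightarrow> None | Some u \<Rightarrow> subterm_at u q)"
  by (induction t p rule: subterm_at.induct) auto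

lemma funpow_Fun: "(subst_apply \<sigma> ^^ k) (Fun f ts) = Fun f (map (subst_apply \<sigma> ^^ k) ts)"
  by (induction k) auto

lemma funpow_Name: "(subst_apply \<sigma> ^^ k) (Name n) = Name n"
  by (induction k) auto

lemma funpow_Const: "(subst_apply \<sigma> ^^ k) (Const n) = Const n"
  by (induction k) auto

lemma app_Fun: "Fun f ts \<cdot> \<sigma> = Fun f (map (\<lambda>t. t \<cdot> \<sigma>) ts)"
  by (simp add: app_def funpow_Fun)

lemma app_Name: "Name n \<cdot> \<sigma> = Name n"
  by (simp add: app_def funpow_Name)

lemma app_Const: "Const n \<cdot> \<sigma> = Const n"
  by (simp add: app_def funpow_Const)

definition goodA :: "(string \<Rightarrow> trm) \<Rightarrow> string set \<Rightarrow> string \<Rightarrow> trm \<Rightarrow> bool" where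
  "goodA E R s T \<longleftrightarrow> (\<forall>qs. subterm_at T qs = Some (Name s) \<longrightarrow>
      (\<exists>q r. strict_prefix q qs \<and> r \<in> R \<and> subterm_at T q = Some (E r)))"

definition goodB :: "(string \<Rightarrow> trm) \<Rightarrow> string set \<Rightarrow> trm \<Rightarrow> bool" where
  "goodB E R T \<longleftrightarrow> (\<forall>p r. p \<noteq> [] \<and> r \<in> R \<and> subterm_at T p = Some (Name r) \<longrightarrow>
      (\<exists>q. p = q @ [3] \<and> subterm_at T q = Some (E r)))"

definition goodBf :: "(string \<Rightarrow> trm) \<Rightarrow> string set \<Rightarrow> trm \<Rightarrow> bool" where
  "goodBf E R T \<longleftrightarrow> (\<forall>p r. r \<in> R \<and> subterm_at T p = Some (Name r) \<longrightarrow>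
      (\<exists>q. p = q @ [3] \<and> subterm_at T q = Some (E r)))"

lemma goodA_Name_s: "\<not> goodA E R s (Name s)"
  unfolding goodA_def by (simp, rule exI[of _ "[]"]) simp

lemma goodA_child:
  assumes "goodA E R s (Fun f ts)" "\<forall>r\<in>R. Fun f ts \<noteq> E r" "i < length ts"
  shows "goodA E R s (ts ! i)"
  unfolding goodA_def
proof (intro allI impI)
  fix qs assume h: "subterm_at (ts ! i) qs = Some (Name s)"
  then have "subterm_at (Fun f ts) (Suc i # qs) = Some (Name s)" using assms(3) by simp
  then obtain q r where q: "strict_prefix q (Suc i # qs)" "r \<in> R" "subterm_at (Fun f ts) q = Some (E r)"
    using assms(1) unfolding goodA_def by blast
  then have "q \<noteq> []" using assms(2) by auto
  then obtain q' where "q = Suc i # q'" "strict_prefix q' qs" using q(1)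
    by (cases q) auto
  then show "\<exists>q r. strict_prefix q qs \<and> r \<in> R \<and> subterm_at (ts ! i) q = Some (E r)"
    using q assms(3) by auto
qed

lemma goodB_child:
  assumes "goodB E R (Fun f ts)" "\<forall>r\<in>R. Fun f ts \<noteq> E r" "i < length ts"
  shows "goodB E R (ts ! i)"
  unfolding goodB_def
proof (intro allI impI)
  fix p r assume h: "p \<noteq> [] \<and> r \<in> R \<and> subterm_at (ts ! i) p = Some (Name r)"
  then have "subterm_at (Fun f ts) (Suc i # p) = Some (Name r)" using assms(3) by simp
  then obtain q where q: "Suc i # p = q @ [3]" "subterm_at (Fun f ts) q = Some (E r)"
    using assms(1) h unfolding goodB_def by blast
  then have "q \<noteq> []" using assms(2) h by auto
  then obtain q' where "q = Suc i # q'" "p = q' @ [3]" using q(1)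
    by (cases q) auto
  then show "\<exists>q. p = q @ [3] \<and> subterm_at (ts ! i) q = Some (E r)"
    using q assms(3) by auto
qed

lemma repl_Name_cases: "repl s M t = Name n \<Longrightarrow> t = Name n \<or> (t = Name s \<and> M = Name n)"
  by (cases t) (auto split: if_splits)

lemma repl_Fun_cases: "repl s M t = Fun f us \<Longrightarrow> t = Name s \<or> (\<exists>ts. t = Fun f ts \<and> us = map (repl s M) ts)"
  by (cases t) (auto split: if_splits)

lemma main:
  assumes M: "\<forall>r\<in>R. M \<noteq> Name r"
    and E3: "\<forall>r\<in>R. subterm_at (E r) [3] = Some (Name r)"
    and sR: "s \<notin> R"
  shows "goodA E R s T1 \<Longrightarrow> goodB E R T1 \<Longrightarrow> goodA E R s T2 \<Longrightarrow> goodB E R T2 \<Longrightarrow>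
     repl s M T1 = repl s M T2 \<Longrightarrow> T1 = T2"
proof (induction T1 arbitrary: T2)
  case (Var x)
  then show ?case using goodA_Name_s by (cases T2) (auto split: if_splits)
next
  case (Name n)
  then show ?case using goodA_Name_s by (cases T2) (auto split: if_splits)
next
  case (Const c)
  then show ?case using goodA_Name_s by (cases T2) (auto split: if_splits)
next
  case (Fun f ts)
  have "repl s M T2 = Fun f (map (repl s M) ts)" using Fun.prems(5) by simp
  then obtain ts2 where T2: "T2 = Fun f ts2" and eqs: "map (repl s M) ts = map (repl s M) ts2"
    using repl_Fun_cases[of s M T2 f] goodA_Name_s Fun.prems(3) by metis
  have len: "length ts = length ts2" using eqs map_eq_imp_length_eq by blast
  have key: "Fun f xs = E r" if kr: "r \<in> R" and ks: "subterm_at (Fun f ys) [3] = Some (Name r)"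
    and kg: "goodB E R (Fun f xs)" and ke: "map (repl s M) ys = map (repl s M) xs" for xs ys r
  proof -
    have l: "length ys = length xs" using ke map_eq_imp_length_eq by blast
    have y0: "3 \<le> length ys \<and> subterm_at (ys ! (3 - 1)) [] = Some (Name r)"
      using ks by (simp only: subterm_at.simps split: if_splits) simp
    have y: "2 < length ys" "ys ! 2 = Name r" using y0 by auto
    have "repl s M (xs ! 2) = map (repl s M) xs ! 2" using y l by simp
    also have "\<dots> = map (repl s M) ys ! 2" using ke by simp
    also have "\<dots> = Name r" using y kr sR by auto
    finally have "repl s M (xs ! 2) = Name r" .
    then have "xs ! 2 = Name r" using repl_Name_cases M kr by blast
    then have "subterm_at (Fun f xs) [3] = Some (Name r)" using y l by simp
    then obtain q where "[3] = q @ [3]" "subterm_at (Fun f xs) q = Some (E r)"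
      using kr kg unfolding goodB_def by blast
    then show ?thesis by simp
  qed
  show ?case
  proof (cases "\<exists>r\<in>R. Fun f ts = E r \<or> T2 = E r")
    case True
    then obtain r where r: "r \<in> R" "Fun f ts = E r \<or> T2 = E r" by blast
    from r(2) show ?thesis
    proof
      assume "Fun f ts = E r"
      then show ?thesis using key[of r ts ts2] r E3 Fun.prems(4) T2 eqs by auto
    next
      assume "T2 = E r"
      then show ?thesis using key[of r ts2 ts] r E3 Fun.prems(2) T2 eqs by auto
    qed
  next
    case False
    have "ts ! i = ts2 ! i" if i: "i < length ts" for i
    proof (rule Fun.IH)
      show "ts ! i \<in> set ts" using i by simp
      show "goodA E R s (ts ! i)" using goodA_child Fun.prems(1) False i by blast
      show "goodB E R (ts ! i)" using goodB_child Fun.prems(2) False i by blast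
      show "goodA E R s (ts2 ! i)" using goodA_child Fun.prems(3) False i len T2 by auto
      show "goodB E R (ts2 ! i)" using goodB_child Fun.prems(4) False i len T2 by auto
      show "repl s M (ts ! i) = repl s M (ts2 ! i)" using eqs i len nth_map[of i ts "repl s M"] nth_map[of i ts2 "repl s M"] by simp
    qed
    then show ?thesis using T2 len by (simp add: list_eq_iff_nth_eq)
  qed
qed


lemma goodA_Fun: "\<forall>t\<in>set ts. goodA E R s t \<Longrightarrow> goodA E R s (Fun f ts)"
  unfolding goodA_def
proof (intro allI impI)
  fix qs assume a: "\<forall>t\<in>set ts. \<forall>qs. subterm_at t qs = Some (Name s) \<longrightarrow>
      (\<exists>q r. strict_prefix q qs \<and> r \<in> R \<and> subterm_at t q = Some (E r))"
    and h: "subterm_at (Fun f ts) qs = Some (Name s)"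
  then obtain i qs' where qs: "qs = i # qs'" by (cases qs) auto
  have i: "1 \<le> i" "i \<le> length ts" and h': "subterm_at (ts ! (i - 1)) qs' = Some (Name s)"
    using h qs by (auto split: if_splits)
  have "ts ! (i - 1) \<in> set ts" using i by auto
  then obtain q r where "strict_prefix q qs'" "r \<in> R" "subterm_at (ts ! (i - 1)) q = Some (E r)"
    using a h' by blast
  then show "\<exists>q r. strict_prefix q qs \<and> r \<in> R \<and> subterm_at (Fun f ts) q = Some (E r)"
    using i qs by (intro exI[of _ "i # q"] exI[of _ r]) auto
qed

lemma goodBf_Fun: "\<forall>t\<in>set ts. goodBf E R t \<Longrightarrow> goodBf E R (Fun f ts)"
  unfolding goodBf_def
proof (intro allI impI)
  fix p r assume a: "\<forall>t\<in>set ts. \<forall>p r. r \<in> R \<and> subterm_at t p = Some (Name r) \<longrightarrow>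
      (\<exists>q. p = q @ [3] \<and> subterm_at t q = Some (E r))"
    and h: "r \<in> R \<and> subterm_at (Fun f ts) p = Some (Name r)"
  then obtain i p' where p: "p = i # p'" by (cases p) auto
  have i: "1 \<le> i" "i \<le> length ts" and h': "subterm_at (ts ! (i - 1)) p' = Some (Name r)"
    using h p by (auto split: if_splits)
  have "ts ! (i - 1) \<in> set ts" using i by auto
  then obtain q where "p' = q @ [3]" "subterm_at (ts ! (i - 1)) q = Some (E r)"
    using a h' h by blast
  then show "\<exists>q. p = q @ [3] \<and> subterm_at (Fun f ts) q = Some (E r)"
    using i p by (intro exI[of _ "i # q"]) auto
qed

lemma good_app:
  assumes fr: "\<forall>x\<in>dom \<sigma>. goodA E R s (Var x \<cdot> \<sigma>) \<and> goodBf E R (Var x \<cdot> \<sigma>)"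
    and sn: "s \<in> ns" and Rn: "R \<subseteq> ns"
  shows "vars_trm U \<subseteq> dom \<sigma> \<Longrightarrow> names_trm U \<inter> ns = {} \<Longrightarrow>
     goodA E R s (U \<cdot> \<sigma>) \<and> goodBf E R (U \<cdot> \<sigma>)"
proof (induction U)
  case (Var x)
  then show ?case using fr by auto
next
  case (Name n)
  have "n \<noteq> s" "n \<notin> R" using Name sn Rn by auto
  then show ?case unfolding app_Name goodA_def goodBf_def
    by (auto elim: subterm_at.elims split: if_splits)
next
  case (Const c)
  then show ?case unfolding app_Const goodA_def goodBf_def
    by (auto elim: subterm_at.elims split: if_splits)
next
  case (Fun f ts)
  have "\<forall>t\<in>set ts. goodA E R s (t \<cdot> \<sigma>) \<and> goodBf E R (t \<cdot> \<sigma>)"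
  proof
    fix t assume t: "t \<in> set ts"
    have "vars_trm t \<subseteq> dom \<sigma>" "names_trm t \<inter> ns = {}" using Fun.prems t by auto
    then show "goodA E R s (t \<cdot> \<sigma>) \<and> goodBf E R (t \<cdot> \<sigma>)" using Fun.IH t by blast
  qed
  then show ?case unfolding app_Fun by (auto intro!: goodA_Fun goodBf_Fun)
qed

lemma agent_enc_mono: "agent_enc A t q \<Longrightarrow> A \<subseteq> B \<Longrightarrow> agent_enc B t q"
  unfolding agent_enc_def by blast

lemma prefix_snoc_strict: "prefix (x @ [a]) y \<Longrightarrow> strict_prefix x y"
  by (metis prefix_order.dual_order.strict_trans1 prefix_order.less_le prefixI self_append_conv snoc_eq_iff_butlast)

theorem corollary2p14:
  fixes ns :: "string set" and \<sigma> :: subst and s :: string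
    and U V M W W' :: trm
  assumes frame: "finite ns" "acyclic_subst \<sigma>" "\<forall>t\<in>frame_terms \<sigma>. wf_trm t"
    and s_in: "s \<in> ns"
    and ewf: "ext_wf ns \<sigma> s"
    and not_ded: "\<not> deduce ns \<sigma> (Name s)"
    and U: "wf_trm U" "public ns U" "vars_trm U \<subseteq> dom \<sigma>"
    and V: "wf_trm V" "public ns V" "vars_trm V \<subseteq> dom \<sigma>"
    and M: "wf_trm M" "public ns M" "vars_trm M = {}"
    and W_sub: "\<exists>t\<in>frame_terms \<sigma>. \<exists>p. subterm_at t p = Some W"
    and W'_sub: "\<exists>t\<in>frame_terms \<sigma>. \<exists>p. subterm_at t p = Some W'"
    and W_enc: "\<forall>qs. subterm_at W qs = Some (Name s) \<longrightarrow>
                  (\<exists>qe. enc_occ W qe \<and> strict_prefix qe qs)"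
    and W'_enc: "\<forall>qs. subterm_at W' qs = Some (Name s) \<longrightarrow>
                  (\<exists>qe. enc_occ W' qe \<and> strict_prefix qe qs)"
  shows "(repl s M (U \<cdot> \<sigma>) = repl s M (V \<cdot> \<sigma>) \<longrightarrow> U \<cdot> \<sigma> = V \<cdot> \<sigma>)
       \<and> (repl s M (U \<cdot> \<sigma>) = repl s M W \<longrightarrow> U \<cdot> \<sigma> = W)
       \<and> (repl s M W = repl s M W' \<longrightarrow> W = W')"
proof -
  define FT where "FT = frame_terms \<sigma>"
  define R where "R = {r. r \<in> ns - {s} \<and> (\<exists>t\<in>FT. \<exists>q. agent_enc (ns - {s}) t q \<and>
      subterm_at t (q @ [3]) = Some (Name r))}"
  define E where "E r = (SOME e. \<exists>t\<in>FT. \<exists>q. agent_enc (ns - {s}) t q \<and>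
      subterm_at t (q @ [3]) = Some (Name r) \<and> subterm_at t q = Some e)" for r
  have FT_iff: "t \<in> FT \<longleftrightarrow> (\<exists>y\<in>dom \<sigma>. t = Var y \<cdot> \<sigma>)" for t
    unfolding FT_def frame_terms_def by auto
  have ew1: "\<forall>t\<in>FT. \<forall>q. agent_enc ns t q \<longrightarrow> prob_enc FT t q"
    using ewf unfolding ext_wf_def FT_def by blast
  have ew3: "\<forall>y\<in>dom \<sigma>. \<forall>qs. subterm_at (Var y \<cdot> \<sigma>) qs = Some (Name s) \<longrightarrow>
        (\<exists>q. agent_enc (ns - {s}) (Var y \<cdot> \<sigma>) q \<and> plaintext_above q qs)"
    using ewf unfolding ext_wf_def by blast
  have ew4: "\<forall>y\<in>dom \<sigma>. \<forall>qs q0. subterm_at (Var y \<cdot> \<sigma>) qs = Some (Name s)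
        \<and> agent_enc (ns - {s}) (Var y \<cdot> \<sigma>) q0 \<and> plaintext_above q0 qs
        \<and> (\<forall>q'. agent_enc (ns - {s}) (Var y \<cdot> \<sigma>) q' \<and> plaintext_above q' qs \<longrightarrow> prefix q' q0)
        \<longrightarrow> (\<forall>q. strict_prefix q0 q \<and> strict_prefix q qs \<longrightarrow>
               head_in (the (subterm_at (Var y \<cdot> \<sigma>) q)) {Pair, Sign})"
    using ewf unfolding ext_wf_def by blast
  have sR: "s \<notin> R" and Rn: "R \<subseteq> ns" unfolding R_def by auto
  have F1: "\<exists>t\<in>FT. \<exists>q. agent_enc (ns - {s}) t q \<and>
      subterm_at t (q @ [3]) = Some (Name r) \<and> subterm_at t q = Some (E r)" if r: "r \<in> R" for r
  proof -
    obtain t q where tq: "t \<in> FT" "agent_enc (ns - {s}) t q" "subterm_at t (q @ [3]) = Some (Name r)"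
      using r unfolding R_def by blast
    then obtain e where "subterm_at t q = Some e" unfolding agent_enc_def enc_occ_def by blast
    then have "\<exists>e. \<exists>t\<in>FT. \<exists>q. agent_enc (ns - {s}) t q \<and>
      subterm_at t (q @ [3]) = Some (Name r) \<and> subterm_at t q = Some e" using tq by blast
    from someI_ex[OF this] show ?thesis unfolding E_def .
  qed
  have E3: "\<forall>r\<in>R. subterm_at (E r) [3] = Some (Name r)"
  proof
    fix r assume "r \<in> R"
    from F1[OF this] obtain t q where "subterm_at t (q @ [3]) = Some (Name r)" "subterm_at t q = Some (E r)"
      by blast
    then show "subterm_at (E r) [3] = Some (Name r)" by (simp add: subterm_at_append)
  qed
  have F3: "\<exists>q'. p = q' @ [3] \<and> subterm_at t q' = Some (E r)"
    if t: "t \<in> FT" and r: "r \<in> R" and h: "subterm_at t p = Some (Name r)" for t r p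
  proof -
    from F1[OF r] obtain t' q where tq: "t' \<in> FT" "agent_enc (ns - {s}) t' q"
      "subterm_at t' (q @ [3]) = Some (Name r)" "subterm_at t' q = Some (E r)" by blast
    have "agent_enc ns t' q" using tq(2) agent_enc_mono by blast
    then have "prob_enc FT t' q" using ew1 tq(1) by blast
    then have "\<exists>q'. p = q' @ [3] \<and> subterm_at t q' = subterm_at t' q"
      unfolding prob_enc_def using t h tq(3) by auto
    then show ?thesis using tq(4) by auto
  qed
  have F4: "\<exists>r\<in>R. subterm_at t q = Some (E r)"
    if t: "t \<in> FT" and a: "agent_enc (ns - {s}) t q" for t q
  proof -
    obtain n where n: "n \<in> ns - {s}" "subterm_at t (q @ [3]) = Some (Name n)"
      using a unfolding agent_enc_def by blast
    then have nR: "n \<in> R" unfolding R_def using t a by blast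
    from F3[OF t nR n(2)] show ?thesis using nR by auto
  qed
  have frame_good: "goodA E R s t \<and> goodBf E R t" if t: "t \<in> FT" for t
  proof
    show "goodBf E R t" unfolding goodBf_def using F3[OF t] by blast
    show "goodA E R s t" unfolding goodA_def
    proof (intro allI impI)
      fix qs assume h: "subterm_at t qs = Some (Name s)"
      obtain y where y: "y \<in> dom \<sigma>" "t = Var y \<cdot> \<sigma>" using t FT_iff by blast
      then obtain q where q: "agent_enc (ns - {s}) t q" "plaintext_above q qs"
        using ew3 h by blast
      then obtain r where "r \<in> R" "subterm_at t q = Some (E r)" using F4 t by blast
      moreover have "strict_prefix q qs" using q(2) prefix_snoc_strict[of q 1 qs]
        unfolding plaintext_above_def by blast
      ultimately show "\<exists>q r. strict_prefix q qs \<and> r \<in> R \<and> subterm_at t q = Some (E r)" by blast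
    qed
  qed
  have app_good: "goodA E R s (X \<cdot> \<sigma>) \<and> goodB E R (X \<cdot> \<sigma>)"
    if "public ns X" "vars_trm X \<subseteq> dom \<sigma>" for X
  proof -
    have "\<forall>x\<in>dom \<sigma>. goodA E R s (Var x \<cdot> \<sigma>) \<and> goodBf E R (Var x \<cdot> \<sigma>)"
      using frame_good FT_iff by blast
    from good_app[OF this s_in Rn, of X] that show ?thesis
      unfolding public_def goodBf_def goodB_def by blast
  qed
  have sub_good: "goodA E R s X \<and> goodB E R X"
    if Xs: "\<exists>t\<in>frame_terms \<sigma>. \<exists>p. subterm_at t p = Some X"
    and Xe: "\<forall>qs. subterm_at X qs = Some (Name s) \<longrightarrow> (\<exists>qe. enc_occ X qe \<and> strict_prefix qe qs)"
    for X
  proof -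
    obtain t p where t: "t \<in> FT" and tp: "subterm_at t p = Some X" using Xs unfolding FT_def by blast
    have tpa: "subterm_at t (p @ a) = subterm_at X a" for a using tp by (simp add: subterm_at_append)
    show ?thesis
    proof
      show "goodB E R X" unfolding goodB_def
      proof (intro allI impI)
        fix p' r assume h: "p' \<noteq> [] \<and> r \<in> R \<and> subterm_at X p' = Some (Name r)"
        then obtain q' where q': "p @ p' = q' @ [3]" "subterm_at t q' = Some (E r)"
          using F3[OF t, of r "p @ p'"] tpa by auto
        have "p' = butlast p' @ [last p']" using h by simp
        then have "p @ butlast p' @ [last p'] = q' @ [3]" using q'(1) by metis
        then have "q' = p @ butlast p'" "last p' = 3" by auto
        then show "\<exists>q. p' = q @ [3] \<and> subterm_at X q = Some (E r)"
          using q'(2) tpa h by (metis append_butlast_last_id)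
      qed
      show "goodA E R s X" unfolding goodA_def
      proof (intro allI impI)
        fix qs assume h: "subterm_at X qs = Some (Name s)"
        obtain y where y: "y \<in> dom \<sigma>" "t = Var y \<cdot> \<sigma>" using t FT_iff by blast
        have hs: "subterm_at t (p @ qs) = Some (Name s)" using h tpa by simp
        define P where "P q \<longleftrightarrow> agent_enc (ns - {s}) t q \<and> plaintext_above q (p @ qs)" for q
        obtain q where "P q" using ew3 y hs unfolding P_def by blast
        have Pl: "\<forall>q. P q \<longrightarrow> length q < length (p @ qs) + 1"
          unfolding P_def plaintext_above_def by (auto dest: prefix_length_le)
        obtain q0 where q0: "P q0" "\<forall>q. P q \<longrightarrow> length q \<le> length q0"
          using ex_has_greatest_nat[OF \<open>P q\<close> Pl] by blast
        have Ppre: "prefix q (p @ qs)" if "P q" for q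
          using that prefix_snoc_strict[of q 1 "p @ qs"] unfolding P_def plaintext_above_def
          by (meson prefix_order.less_imp_le)
        have allp: "\<forall>q'. P q' \<longrightarrow> prefix q' q0"
          using q0 Ppre prefix_length_prefix by blast
        have heads: "\<forall>q. strict_prefix q0 q \<and> strict_prefix q (p @ qs) \<longrightarrow>
               head_in (the (subterm_at t q)) {Pair, Sign}"
          using ew4 y hs q0(1) allp unfolding P_def by blast
        obtain qe where qe: "enc_occ X qe" "strict_prefix qe qs" using Xe h by blast
        have qe2: "strict_prefix (p @ qe) (p @ qs)" using qe(2) by (simp add: strict_prefix_def)
        have "prefix (p @ qe) q0"
        proof (rule ccontr)
          assume nq: "\<not> prefix (p @ qe) q0"
          have "prefix q0 (p @ qe)" using prefix_same_cases[OF Ppre[OF q0(1)], of "p @ qe"] qe2 nq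
            by (meson prefix_order.less_imp_le)
          then have "strict_prefix q0 (p @ qe)" using nq by auto
          then have "head_in (the (subterm_at t (p @ qe))) {Pair, Sign}" using heads qe2 by blast
          moreover have "head_in (the (subterm_at t (p @ qe))) {Enc, Enca}"
            using qe(1) tpa unfolding enc_occ_def by simp
          ultimately show False unfolding head_in_def by auto
        qed
        then obtain z where z: "q0 = p @ qe @ z" unfolding prefix_def by auto
        obtain r where r: "r \<in> R" "subterm_at t q0 = Some (E r)" using F4 t q0(1) unfolding P_def by blast
        have "prefix (q0 @ [1]) (p @ qs)" using q0(1) unfolding P_def plaintext_above_def by blast
        then have "prefix ((qe @ z) @ [1]) qs" using z by simp
        then have "strict_prefix (qe @ z) qs" using prefix_snoc_strict[of "qe @ z" 1 qs] by blast
        moreover have "subterm_at X (qe @ z) = Some (E r)" using r z tpa by simp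
        ultimately show "\<exists>q r. strict_prefix q qs \<and> r \<in> R \<and> subterm_at X q = Some (E r)"
          using r(1) by blast
      qed
    qed
  qed
  have MR: "\<forall>r\<in>R. M \<noteq> Name r" using M(2) Rn unfolding public_def by auto
  note mn = main[OF MR E3 sR]
  have gU: "goodA E R s (U \<cdot> \<sigma>)" "goodB E R (U \<cdot> \<sigma>)" using app_good U by auto
  have gV: "goodA E R s (V \<cdot> \<sigma>)" "goodB E R (V \<cdot> \<sigma>)" using app_good V by auto
  have gW: "goodA E R s W" "goodB E R W" using sub_good W_sub W_enc by auto
  have gW': "goodA E R s W'" "goodB E R W'" using sub_good W'_sub W'_enc by auto
  show ?thesis using mn[OF gU gV] mn[OF gU gW] mn[OF gW gW'] by blast
qed

end
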